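(* Let $N\ge 1$, let $\Delta\subseteq\{0,1\}^N$ and let $g:\Delta\to\{0,1\}$ be a partial Boolean function. Suppose $g$ is computed by an $R$-round deterministic AMPC algorithm with I/O capacity $S$. Then there is a real polynomial $p(x_1,\dots,x_N)$ of degree at most $S^{2R}$ such that $p(x)=g(x)$ for every $x\in\Delta$ and $p(x)\in\{0,1\}$ for every $x\in\{0,1\}^N\setminus\Delta$. In particular, if $g$ is total (i.e. $\Delta=\{0,1\}^N$), then $\deg(g)\le S^{2R}$.
   Context: AMPC model with I/O capacity $S$ (a positive integer). The computation proceeds in rounds $1,\dots,R$, communicating through distributed data stores (DDS) $\mathcal{D}_0,\mathcal{D}_1,\dots,\mathcal{D}_R$. A DDS stores, under each key, a multiset of values (possibly empty); each value is written by a unique machine and duplicates are allowed. On input $x\in\{0,1\}^N$, $\mathcal{D}_0$ consists of the $N$ key-value pairs $(i,x_i)$, $i=1,\dots,N$. In round $r\ge1$, each machine (there may be arbitrarily many machines, each computationally unbounded and deterministic) adaptively makes a sequence of queries to $\mathcal{D}_{r-1}$: each query is a key, the response is the entire multiset of values stored under that key in $\mathcal{D}_{r-1}$ (empty if none), and each query may depend arbitrarily on the keys and responses of the machine's earlier queries in that round. The sum of the total number of values in all responses and the number of queries with empty response is at most $S$; then the machine writes at most $S$ key-value pairs to $\mathcal{D}_r$, as an arbitrary function of its sequence of queries and responses. The multiset stored under key $k$ in $\mathcal{D}_r$ is the multiset union of all values written under $k$ in round $r$. The algorithm is run on all inputs $x\in\{0,1\}^N$ (including invalid ones $x\notin\Delta$),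 where a machine whose budget would be exceeded stops querying and writes nothing; it is required that in every round, on every input in $\{0,1\}^N$, at most $S$ values are written under any single key. The algorithm computes $g$ in $R$ rounds if for every $x\in\Delta$, $\mathcal{D}_R$ contains exactly the single key-value pair $(\textsc{answer},g(x))$. For a total Boolean function $g:\{0,1\}^N\to\{0,1\}$, $\deg(g)$ is the degree of the unique multilinear real polynomial agreeing with $g$ on $\{0,1\}^N$. *)

theory Defs
  imports Complex_Main "HOL-Library.Multiset"
begin

datatype 'k key = Inp nat | Answer | Key 'k
datatype 'v val = Bit bool | Val 'v

type_synonym ('k,'v) dds = "'k key \<Rightarrow> 'v val multiset"
(* the sequence of (query key, response) pairs of a machine in one round *)
type_synonym ('k,'v) hist = "('k key \<times> 'v val multiset) list"

definition cost :: "('k,'v) hist \<Rightarrow> nat" where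
  "cost h = (\<Sum>p\<leftarrow>h. if snd p = {#} then 1 else size (snd p))"

(* adaptive querying with budget S; None = budget exceeded (machine writes nothing).
   Each query costs at least 1, so fuel S+1 always suffices. *)
fun exec :: "nat \<Rightarrow> nat \<Rightarrow> (('k,'v) hist \<Rightarrow> 'k key option) \<Rightarrow> ('k,'v) dds
              \<Rightarrow> ('k,'v) hist \<Rightarrow> ('k,'v) hist option" where
  "exec S 0 q D h =
     (if cost h > S then None else (case q h of None \<Rightarrow> Some h | Some _ \<Rightarrow> None))"
| "exec S (Suc n) q D h =
     (if cost h > S then None
      else (case q h of None \<Rightarrow> Some h | Some k \<Rightarrow> exec S n q D (h @ [(k, D k)])))"

definition machine_writes ::
  "nat \<Rightarrow> (('k,'v) hist \<Rightarrow> 'k key option) \<Rightarrow> (('k,'v) hist \<Rightarrow> ('k key \<times> 'v val) list)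
   \<Rightarrow> ('k,'v) dds \<Rightarrow> ('k key \<times> 'v val) list" where
  "machine_writes S q w D = (case exec S (Suc S) q D [] of None \<Rightarrow> [] | Some h \<Rightarrow> w h)"

definition writers ::
  "nat \<Rightarrow> ('m \<Rightarrow> ('k,'v) hist \<Rightarrow> 'k key option) \<Rightarrow> ('m \<Rightarrow> ('k,'v) hist \<Rightarrow> ('k key \<times> 'v val) list)
   \<Rightarrow> ('k,'v) dds \<Rightarrow> 'k key \<Rightarrow> ('m \<times> nat) set" where
  "writers S q w D k = {(m, j). j < length (machine_writes S (q m) (w m) D)
                               \<and> fst (machine_writes S (q m) (w m) D ! j) = k}"

definition step ::
  "nat \<Rightarrow> ('m \<Rightarrow> ('k,'v) hist \<Rightarrow> 'k key option) \<Rightarrow> ('m \<Rightarrow> ('k,'v) hist \<Rightarrow> ('k key \<times> 'v val) list)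
   \<Rightarrow> ('k,'v) dds \<Rightarrow> ('k,'v) dds" where
  "step S q w D = (\<lambda>k. \<Sum>p\<in>writers S q w D k.
                         {# snd (machine_writes S (q (fst p)) (w (fst p)) D ! snd p) #})"

(* inputs x in {0,1}^N are functions nat => bool supported on {1..N} *)
definition cube :: "nat \<Rightarrow> (nat \<Rightarrow> bool) set" where
  "cube N = {x. \<forall>i. x i \<longrightarrow> 1 \<le> i \<and> i \<le> N}"

definition init_dds :: "nat \<Rightarrow> (nat \<Rightarrow> bool) \<Rightarrow> ('k,'v) dds" where
  "init_dds N x = (\<lambda>k. case k of Inp i \<Rightarrow> if 1 \<le> i \<and> i \<le> N then {#Bit (x i)#} else {#}
                                | _ \<Rightarrow> {#})"

(* D_r on input x; q r m / w r m are the query strategy / write function of machine m in round r *)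
fun dds_round ::
  "nat \<Rightarrow> nat \<Rightarrow> (nat \<Rightarrow> 'm \<Rightarrow> ('k,'v) hist \<Rightarrow> 'k key option)
   \<Rightarrow> (nat \<Rightarrow> 'm \<Rightarrow> ('k,'v) hist \<Rightarrow> ('k key \<times> 'v val) list)
   \<Rightarrow> (nat \<Rightarrow> bool) \<Rightarrow> nat \<Rightarrow> ('k,'v) dds" where
  "dds_round N S q w x 0 = init_dds N x"
| "dds_round N S q w x (Suc r) = step S (q (Suc r)) (w (Suc r)) (dds_round N S q w x r)"

definition ampc_computes ::
  "nat \<Rightarrow> nat \<Rightarrow> nat \<Rightarrow> (nat \<Rightarrow> 'm \<Rightarrow> ('k,'v) hist \<Rightarrow> 'k key option)
   \<Rightarrow> (nat \<Rightarrow> 'm \<Rightarrow> ('k,'v) hist \<Rightarrow> ('k key \<times> 'v val) list)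
   \<Rightarrow> (nat \<Rightarrow> bool) set \<Rightarrow> ((nat \<Rightarrow> bool) \<Rightarrow> bool) \<Rightarrow> bool" where
  "ampc_computes N S R q w \<Delta> g \<longleftrightarrow>
     (\<forall>r\<in>{1..R}. \<forall>m h. length (w r m h) \<le> S) \<and>
     (\<forall>r\<in>{1..R}. \<forall>x\<in>cube N. \<forall>k.
        finite (writers S (q r) (w r) (dds_round N S q w x (r - 1)) k) \<and>
        card (writers S (q r) (w r) (dds_round N S q w x (r - 1)) k) \<le> S) \<and>
     (\<forall>x\<in>\<Delta>. dds_round N S q w x R = (\<lambda>k. if k = Answer then {#Bit (g x)#} else {#}))"

definition poly_deg_le :: "nat \<Rightarrow> nat \<Rightarrow> ((nat \<Rightarrow> real) \<Rightarrow> real) \<Rightarrow> bool" where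
  "poly_deg_le N d p \<longleftrightarrow>
     (\<exists>A c. finite A \<and> (\<forall>\<alpha>\<in>A. (\<Sum>i=1..N. \<alpha> i) \<le> d) \<and>
        (\<forall>y. p y = (\<Sum>\<alpha>\<in>A. c \<alpha> * (\<Prod>i=1..N. y i ^ \<alpha> i))))"

definition ml_eval :: "nat \<Rightarrow> (nat set \<Rightarrow> real) \<Rightarrow> (nat \<Rightarrow> bool) \<Rightarrow> real" where
  "ml_eval N c x = (\<Sum>T\<in>Pow {1..N}. c T * (\<Prod>i\<in>T. of_bool (x i)))"

(* deg(g): degree of the unique multilinear polynomial agreeing with g on {0,1}^N *)
definition deg_bool :: "nat \<Rightarrow> ((nat \<Rightarrow> bool) \<Rightarrow> bool) \<Rightarrow> nat" where
  "deg_bool N g = (THE d. \<exists>c. (\<forall>x\<in>cube N. of_bool (g x) = ml_eval N c x) \<and>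
       d = Max (insert 0 {card T | T. T \<subseteq> {1..N} \<and> c T \<noteq> 0}))"

end

theory Submission
  imports Defs
begin


definition mon :: "nat \<Rightarrow> (nat \<Rightarrow> nat) \<Rightarrow> (nat \<Rightarrow> real) \<Rightarrow> real" where
  "mon N \<alpha> y = (\<Prod>i=1..N. y i ^ \<alpha> i)"

lemma poly_collect:
  fixes J :: "'j set"
  assumes "finite J" "\<forall>j\<in>J. (\<Sum>i=1..N. e j i) \<le> d"
    "\<forall>y. p y = (\<Sum>j\<in>J. a j * mon N (e j) y)"
  shows "poly_deg_le N d p"
proof -
  define c where "c \<alpha> = (\<Sum>j\<in>{j\<in>J. e j = \<alpha>}. a j)" for \<alpha>
  have "p y = (\<Sum>\<alpha>\<in>e ` J. c \<alpha> * mon N \<alpha> y)" for y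
  proof -
    have "p y = (\<Sum>\<alpha>\<in>e ` J. \<Sum>j\<in>{j\<in>J. e j = \<alpha>}. a j * mon N (e j) y)"
      using assms(3) sum.image_gen[OF assms(1), of "\<lambda>j. a j * mon N (e j) y" e] by simp
    also have "\<dots> = (\<Sum>\<alpha>\<in>e ` J. c \<alpha> * mon N \<alpha> y)"
      unfolding c_def sum_distrib_right by (intro sum.cong refl) auto
    finally show ?thesis .
  qed
  then show ?thesis unfolding poly_deg_le_def mon_def using assms(1,2)
    by (intro exI[of _ "e ` J"] exI[of _ c]) auto
qed

lemma poly_deg_le_E:
  assumes "poly_deg_le N d p"
  obtains A c where "finite A" "\<forall>\<alpha>\<in>A. (\<Sum>i=1..N. \<alpha> i) \<le> d"
     "\<forall>y. p y = (\<Sum>\<alpha>\<in>A. c \<alpha> * mon N \<alpha> y)"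
  using assms unfolding poly_deg_le_def mon_def by blast

lemma poly_const: "poly_deg_le N d (\<lambda>y. a)"
  by (rule poly_collect[where J="{()}" and e="\<lambda>_ _. 0" and a="\<lambda>_. a"]) (auto simp: mon_def)

lemma poly_var: assumes "1 \<le> i" "i \<le> N" "1 \<le> d" shows "poly_deg_le N d (\<lambda>y. y i)"
proof (rule poly_collect[where J="{()}" and e="\<lambda>_ j. if j = i then 1 else 0" and a="\<lambda>_. 1"])
  have "(\<Sum>j=1..N. (if j = i then 1 else 0::nat)) = 1" using assms by simp
  then show "\<forall>j\<in>{()}. (\<Sum>ia = 1..N. (if ia = i then 1 else 0::nat)) \<le> d" using assms by simp
  have "mon N (\<lambda>j. if j = i then 1 else 0) y = y i" for y
  proof -
    have "mon N (\<lambda>j. if j = i then 1 else 0) y = (\<Prod>j=1..N. if j = i then y j else 1)"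
      unfolding mon_def by (intro prod.cong) auto
    also have "\<dots> = y i" using assms by (simp add: prod.delta)
    finally show ?thesis .
  qed
  then show "\<forall>y. y i = (\<Sum>j\<in>{()}. 1 * mon N (\<lambda>j. if j = i then 1 else 0) y)" by simp
qed auto

lemma poly_add: assumes "poly_deg_le N d p" "poly_deg_le N d q"
  shows "poly_deg_le N d (\<lambda>y. p y + q y)"
proof -
  obtain A c where A: "finite A" "\<forall>\<alpha>\<in>A. (\<Sum>i=1..N. \<alpha> i) \<le> d"
     "\<forall>y. p y = (\<Sum>\<alpha>\<in>A. c \<alpha> * mon N \<alpha> y)" using poly_deg_le_E[OF assms(1)] by blast
  obtain B b where B: "finite B" "\<forall>\<alpha>\<in>B. (\<Sum>i=1..N. \<alpha> i) \<le> d"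
     "\<forall>y. q y = (\<Sum>\<alpha>\<in>B. b \<alpha> * mon N \<alpha> y)" using poly_deg_le_E[OF assms(2)] by blast
  show ?thesis
  proof (rule poly_collect[where J="A <+> B" and e="case_sum (\<lambda>x. x) (\<lambda>x. x)"
        and a="case_sum c b"])
    show "\<forall>y. p y + q y = (\<Sum>j\<in>A <+> B. case_sum c b j * mon N (case_sum (\<lambda>x. x) (\<lambda>x. x) j) y)"
      using A B by (simp add: sum.Plus)
  qed (use A B in auto)
qed

lemma poly_mult: assumes "poly_deg_le N d1 p" "poly_deg_le N d2 q" "d1 + d2 \<le> d"
  shows "poly_deg_le N d (\<lambda>y. p y * q y)"
proof -
  obtain A c where A: "finite A" "\<forall>\<alpha>\<in>A. (\<Sum>i=1..N. \<alpha> i) \<le> d1"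
     "\<forall>y. p y = (\<Sum>\<alpha>\<in>A. c \<alpha> * mon N \<alpha> y)" using poly_deg_le_E[OF assms(1)] by blast
  obtain B b where B: "finite B" "\<forall>\<alpha>\<in>B. (\<Sum>i=1..N. \<alpha> i) \<le> d2"
     "\<forall>y. q y = (\<Sum>\<alpha>\<in>B. b \<alpha> * mon N \<alpha> y)" using poly_deg_le_E[OF assms(2)] by blast
  have mm: "mon N (\<lambda>i. \<alpha> i + \<beta> i) y = mon N \<alpha> y * mon N \<beta> y" for \<alpha> \<beta> y
    unfolding mon_def by (simp add: power_add prod.distrib)
  show ?thesis
  proof (rule poly_collect[where J="A \<times> B" and e="\<lambda>(\<alpha>,\<beta>) i. \<alpha> i + \<beta> i"
        and a="\<lambda>(\<alpha>,\<beta>). c \<alpha> * b \<beta>"])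
    show "\<forall>j\<in>A \<times> B. (\<Sum>i = 1..N. (case j of (\<alpha>, \<beta>) \<Rightarrow> \<lambda>i. \<alpha> i + \<beta> i) i) \<le> d"
      using A(2) B(2) assms(3) by (auto simp: sum.distrib) (smt (verit) add_mono le_trans)
    show "\<forall>y. p y * q y = (\<Sum>j\<in>A \<times> B. (case j of (\<alpha>, \<beta>) \<Rightarrow> c \<alpha> * b \<beta>) *
                 mon N (case j of (\<alpha>, \<beta>) \<Rightarrow> \<lambda>i. \<alpha> i + \<beta> i) y)"
    proof
      fix y
      have "p y * q y = (\<Sum>\<alpha>\<in>A. \<Sum>\<beta>\<in>B. (c \<alpha> * mon N \<alpha> y) * (b \<beta> * mon N \<beta> y))"
        using A(3) B(3) by (simp add: sum_product)
      also have "\<dots> = (\<Sum>(\<alpha>,\<beta>)\<in>A \<times> B. (c \<alpha> * mon N \<alpha> y) * (b \<beta> * mon N \<beta> y))"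
        by (simp add: sum.cartesian_product)
      finally show "p y * q y = (\<Sum>j\<in>A \<times> B. (case j of (\<alpha>, \<beta>) \<Rightarrow> c \<alpha> * b \<beta>) *
                 mon N (case j of (\<alpha>, \<beta>) \<Rightarrow> \<lambda>i. \<alpha> i + \<beta> i) y)"
        by (simp add: mm case_prod_beta mult_ac)
    qed
  qed (use A B in auto)
qed

lemma poly_mono: assumes "poly_deg_le N d p" "d \<le> d'" shows "poly_deg_le N d' p"
  using assms unfolding poly_deg_le_def by (meson order_trans)



definition rep :: "nat \<Rightarrow> nat \<Rightarrow> ((nat \<Rightarrow> bool) \<Rightarrow> real) \<Rightarrow> bool" where
  "rep N d f \<longleftrightarrow> (\<exists>p. poly_deg_le N d p \<and> (\<forall>x\<in>cube N. f x = p (\<lambda>i. of_bool (x i))))"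

lemma finite_cube: "finite (cube N)"
proof -
  have "inj_on (\<lambda>x. {i. x i}) (cube N)" unfolding inj_on_def by auto
  moreover have "(\<lambda>x. {i. x i}) ` cube N \<subseteq> Pow {1..N}" unfolding cube_def by auto
  ultimately show ?thesis by (meson finite_Pow_iff finite_atLeastAtMost finite_subset inj_on_finite)
qed

lemma rep_cong: "rep N d f \<Longrightarrow> (\<And>x. x \<in> cube N \<Longrightarrow> f x = g x) \<Longrightarrow> rep N d g"
  unfolding rep_def by metis

lemma rep_mono: "rep N d f \<Longrightarrow> d \<le> d' \<Longrightarrow> rep N d' f"
  unfolding rep_def using poly_mono by blast

lemma rep_const: "rep N d (\<lambda>x. a)"
  unfolding rep_def using poly_const by blast

lemma rep_var: "1 \<le> i \<Longrightarrow> i \<le> N \<Longrightarrow> 1 \<le> d \<Longrightarrow> rep N d (\<lambda>x. of_bool (x i))"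
  unfolding rep_def using poly_var by fastforce

lemma rep_add: "rep N d f \<Longrightarrow> rep N d g \<Longrightarrow> rep N d (\<lambda>x. f x + g x)"
  unfolding rep_def using poly_add by fastforce

lemma rep_mult: "rep N d1 f \<Longrightarrow> rep N d2 g \<Longrightarrow> d1 + d2 \<le> d \<Longrightarrow> rep N d (\<lambda>x. f x * g x)"
  unfolding rep_def using poly_mult by fastforce

lemma rep_scale: "rep N d f \<Longrightarrow> rep N d (\<lambda>x. a * f x)"
  using rep_mult[OF rep_const, of N d f 0 d a] by simp

lemma rep_diff: "rep N d f \<Longrightarrow> rep N d g \<Longrightarrow> rep N d (\<lambda>x. f x - g x)"
  using rep_add[of N d f "\<lambda>x. (-1) * g x"] rep_scale[of N d g "-1"] by simp

lemma rep_sum: "finite A \<Longrightarrow> (\<And>a. a \<in> A \<Longrightarrow> rep N d (f a)) \<Longrightarrow> rep N d (\<lambda>x. \<Sum>a\<in>A. f a x)"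
proof (induction A rule: finite_induct)
  case empty then show ?case using rep_const[of N d 0] by simp
next
  case (insert a A) then show ?case using rep_add[of N d "f a" "\<lambda>x. \<Sum>a\<in>A. f a x"] by simp
qed

lemma rep_prod_list: "(\<And>a. a \<in> set xs \<Longrightarrow> rep N d (f a)) \<Longrightarrow> length xs * d \<le> d'
   \<Longrightarrow> rep N d' (\<lambda>x. prod_list (map (\<lambda>a. f a x) xs))"
proof (induction xs arbitrary: d')
  case Nil then show ?case using rep_const[of N d' 1] by simp
next
  case (Cons a xs)
  have "rep N (length xs * d) (\<lambda>x. prod_list (map (\<lambda>a. f a x) xs))" using Cons by simp
  then show ?case using rep_mult[of N d "f a" "length xs * d" _ d'] Cons by simp
qed

lemma rep_prod: "finite A \<Longrightarrow> (\<And>a. a \<in> A \<Longrightarrow> rep N d (f a)) \<Longrightarrow> card A * d \<le> d'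
   \<Longrightarrow> rep N d' (\<lambda>x. \<Prod>a\<in>A. f a x)"
proof (induction A arbitrary: d' rule: finite_induct)
  case empty then show ?case using rep_const[of N d' 1] by simp
next
  case (insert a A)
  have "rep N (card A * d) (\<lambda>x. \<Prod>a\<in>A. f a x)" using insert by simp
  then show ?case using rep_mult[of N d "f a" "card A * d" _ d'] insert by simp
qed

lemma rep_push:
  assumes "\<And>a. P a \<Longrightarrow> rep N d (\<lambda>x. of_bool (\<phi> x = a))"
  shows "rep N d (\<lambda>x. of_bool (P (\<phi> x)))"
proof -
  let ?A = "{a\<in>\<phi> ` cube N. P a}"
  have fin: "finite ?A" using finite_cube by simp
  have "rep N d (\<lambda>x. \<Sum>a\<in>?A. of_bool (\<phi> x = a))"
    by (rule rep_sum[OF fin]) (use assms in auto)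
  moreover have "(\<Sum>a\<in>?A. of_bool (\<phi> x = a)) = (of_bool (P (\<phi> x)) :: real)" if "x \<in> cube N" for x
  proof -
    have "(\<Sum>a\<in>?A. of_bool (\<phi> x = a)) = (\<Sum>a\<in>?A. if a = \<phi> x then 1 else (0::real))"
      by (intro sum.cong) auto
    also have "\<dots> = of_bool (P (\<phi> x))" using fin that by (simp add: sum.delta)
    finally show ?thesis .
  qed
  ultimately show ?thesis by (rule rep_cong) simp
qed



fun static :: "(('k,'v) hist \<Rightarrow> 'k key option) \<Rightarrow> ('k,'v) hist \<Rightarrow> ('k,'v) hist \<Rightarrow> bool" where
  "static q h0 [] = (q h0 = None)"
| "static q h0 (a # h1) = (q h0 = Some (fst a) \<and> static q (h0 @ [a]) h1)"

lemma cost_append: "cost (a @ b) = cost a + cost b"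
  unfolding cost_def by simp

lemma cost_Cons: "cost (a # b) = (if snd a = {#} then 1 else size (snd a)) + cost b"
  unfolding cost_def by simp

lemma length_le_cost: "length h \<le> cost h"
proof (induction h)
  case Nil then show ?case by (simp add: cost_def)
next
  case (Cons a h)
  have "1 \<le> (if snd a = {#} then 1 else size (snd a))"
    by (auto simp: Suc_le_eq nonempty_has_size)
  then show ?case using Cons by (simp add: cost_Cons)
qed

lemma exec_char:
  "exec S n q D h0 = Some h \<longleftrightarrow>
     (\<exists>h1. h = h0 @ h1 \<and> length h1 \<le> n \<and> cost h \<le> S \<and> static q h0 h1 \<and>
           (\<forall>a\<in>set h1. D (fst a) = snd a))"
proof (induction n arbitrary: h0)
  case 0
  show ?case by (auto split: option.splits)
next
  case (Suc n)
  show ?case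
  proof (cases "cost h0 > S")
    case True
    then show ?thesis by (auto simp: cost_append)
  next
    case False
    show ?thesis
    proof (cases "q h0")
      case None
      have "(\<exists>h1. h = h0 @ h1 \<and> length h1 \<le> Suc n \<and> cost h \<le> S \<and> static q h0 h1 \<and>
           (\<forall>a\<in>set h1. D (fst a) = snd a)) \<longleftrightarrow> h = h0"
      proof
        assume "\<exists>h1. h = h0 @ h1 \<and> length h1 \<le> Suc n \<and> cost h \<le> S \<and> static q h0 h1 \<and>
           (\<forall>a\<in>set h1. D (fst a) = snd a)"
        then obtain h1 where "h = h0 @ h1" "static q h0 h1" by blast
        then show "h = h0" using None by (cases h1) auto
      qed (use False None in auto)
      then show ?thesis using False None by auto
    next
      case (Some k)
      have "exec S (Suc n) q D h0 = exec S n q D (h0 @ [(k, D k)])" using False Some by simp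
      also have "\<dots> = Some h \<longleftrightarrow> (\<exists>h1. h = (h0 @ [(k, D k)]) @ h1 \<and> length h1 \<le> n \<and> cost h \<le> S \<and>
           static q (h0 @ [(k, D k)]) h1 \<and> (\<forall>a\<in>set h1. D (fst a) = snd a))"
        using Suc.IH by simp
      also have "\<dots> \<longleftrightarrow> (\<exists>h1. h = h0 @ h1 \<and> length h1 \<le> Suc n \<and> cost h \<le> S \<and> static q h0 h1 \<and>
           (\<forall>a\<in>set h1. D (fst a) = snd a))" (is "?L \<longleftrightarrow> ?R")
      proof
        assume ?L
        then obtain h1 where "h = (h0 @ [(k, D k)]) @ h1 \<and> length h1 \<le> n \<and> cost h \<le> S \<and>
           static q (h0 @ [(k, D k)]) h1 \<and> (\<forall>a\<in>set h1. D (fst a) = snd a)" by blast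
        then show ?R using Some by (intro exI[of _ "(k, D k) # h1"]) auto
      next
        assume ?R
        then obtain h1 where h1: "h = h0 @ h1" "length h1 \<le> Suc n" "cost h \<le> S" "static q h0 h1"
           "\<forall>a\<in>set h1. D (fst a) = snd a" by blast
        then obtain a h2 where "h1 = a # h2" using Some by (cases h1) auto
        then show ?L using h1 Some by (intro exI[of _ h2]) (cases a, auto)
      qed
      finally show ?thesis .
    qed
  qed
qed

lemma exec_char0:
  "exec S (Suc S) q D [] = Some h \<longleftrightarrow>
     (cost h \<le> S \<and> static q [] h \<and> (\<forall>a\<in>set h. D (fst a) = snd a))"
  unfolding exec_char using length_le_cost[of h] by auto

lemma of_bool_all_list: "(of_bool (\<forall>a\<in>set h. P a) :: real) = prod_list (map (\<lambda>a. of_bool (P a)) h)"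
  by (induction h) (simp_all add: of_bool_conj)

lemma rep_exec:
  fixes D :: "(nat \<Rightarrow> bool) \<Rightarrow> ('k,'v) dds"
  assumes IH: "\<And>k M. rep N d (\<lambda>x. of_bool (D x k = M))"
  shows "rep N (S * d) (\<lambda>x. of_bool (exec S (Suc S) q (D x) [] = Some h))"
proof (cases "cost h \<le> S \<and> static q [] h")
  case True
  have "rep N (S * d) (\<lambda>x. prod_list (map (\<lambda>a. of_bool (D x (fst a) = snd a)) h))"
    using rep_prod_list[of h N d "\<lambda>a x. of_bool (D x (fst a) = snd a)" "S * d"] IH
      length_le_cost[of h] True by (simp add: mult_right_mono)
  moreover have "exec S (Suc S) q (D x) [] = Some h \<longleftrightarrow> (\<forall>a\<in>set h. D x (fst a) = snd a)" for x
    using exec_char0[of S q "D x" h] True by blast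
  ultimately show ?thesis
    by (rule_tac rep_cong) (simp_all only: of_bool_all_list)
next
  case False
  then have "exec S (Suc S) q (D x) [] \<noteq> Some h" for x
    using exec_char0[of S q "D x" h] by blast
  then show ?thesis using rep_const[of N "S*d" 0] by (rule_tac rep_cong) auto
qed

lemma rep_write:
  fixes D :: "(nat \<Rightarrow> bool) \<Rightarrow> ('k,'v) dds"
  assumes IH: "\<And>k M. rep N d (\<lambda>x. of_bool (D x k = M))"
  shows "rep N (S * d) (\<lambda>x. of_bool (j < length (machine_writes S q w (D x)) \<and>
                               machine_writes S q w (D x) ! j = kv))"
proof -
  define Pw where "Pw ob = (case ob of None \<Rightarrow> False | Some h \<Rightarrow> j < length (w h) \<and> w h ! j = kv)" for ob
  have "rep N (S * d) (\<lambda>x. of_bool (Pw (exec S (Suc S) q (D x) [])))"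
  proof (rule rep_push[of Pw N "S * d" "\<lambda>x. exec S (Suc S) q (D x) []"])
    fix a assume "Pw a"
    then obtain h where "a = Some h" unfolding Pw_def by (cases a) auto
    then show "rep N (S * d) (\<lambda>x. of_bool (exec S (Suc S) q (D x) [] = a))"
      using rep_exec[OF IH] by simp
  qed
  then show ?thesis unfolding machine_writes_def
    by (rule rep_cong) (auto simp del: exec.simps simp: Pw_def split: option.splits)
qed



lemma prod_of_bool: "finite U \<Longrightarrow> (\<Prod>u\<in>U. (of_bool (P u) :: real)) = of_bool (\<forall>u\<in>U. P u)"
  by (induction U rule: finite_induct) auto

lemma incl_excl:
  assumes "finite U" "X \<subseteq> U" "T \<subseteq> U"
  shows "(of_bool (X = T) :: real) = (\<Sum>B\<in>Pow (U - T). (-1) ^ card B * of_bool (T \<union> B \<subseteq> X))"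
proof -
  let ?f = "\<lambda>u. (of_bool (u \<in> X) :: real)"
  have finT: "finite T" using assms finite_subset by blast
  have "(of_bool (X = T) :: real) = of_bool (\<forall>u\<in>U. (u \<in> X \<longleftrightarrow> u \<in> T))"
  proof -
    have "X = T \<longleftrightarrow> (\<forall>u\<in>U. (u \<in> X \<longleftrightarrow> u \<in> T))" using assms by blast
    then show ?thesis by simp
  qed
  also have "\<dots> = (\<Prod>u\<in>U. of_bool (u \<in> X \<longleftrightarrow> u \<in> T))" using prod_of_bool[OF assms(1)] by simp
  also have "\<dots> = (\<Prod>u\<in>U. if u \<in> T then ?f u else (- ?f u) + 1)"
    by (intro prod.cong) auto
  also have "\<dots> = (\<Prod>u\<in>U - T. if u \<in> T then ?f u else (- ?f u) + 1) *
                    (\<Prod>u\<in>T. if u \<in> T then ?f u else (- ?f u) + 1)"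
    by (rule prod.subset_diff[OF assms(3,1)])
  also have "\<dots> = (\<Prod>u\<in>U - T. (- ?f u) + 1) * (\<Prod>u\<in>T. ?f u)"
    by (intro arg_cong2[where f="(*)"] prod.cong) auto
  also have "\<dots> = (\<Sum>B\<in>Pow (U - T). (\<Prod>u\<in>B. - ?f u) * (\<Prod>u\<in>U - T - B. 1)) * (\<Prod>u\<in>T. ?f u)"
    using prod_add[of "U - T" "\<lambda>u. - ?f u" "\<lambda>_. 1"] assms(1) by simp
  also have "\<dots> = (\<Sum>B\<in>Pow (U - T). (-1) ^ card B * of_bool (T \<union> B \<subseteq> X))"
    unfolding sum_distrib_right
  proof (intro sum.cong refl)
    fix B assume B: "B \<in> Pow (U - T)"
    then have finB: "finite B" using assms(1) finite_subset by auto
    have "(\<Prod>u\<in>B. - ?f u) = (-1) ^ card B * (\<Prod>u\<in>B. ?f u)"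
      using prod.distrib[of "\<lambda>_. -1::real" ?f B] by simp
    moreover have "(\<Prod>u\<in>B. ?f u) * (\<Prod>u\<in>T. ?f u) = (\<Prod>u\<in>T \<union> B. ?f u)"
    proof -
      have "T \<inter> B = {}" using B by auto
      then show ?thesis using prod.union_disjoint[OF finT finB, of ?f] by (simp add: mult.commute)
    qed
    moreover have "(\<Prod>u\<in>T \<union> B. ?f u) = of_bool (T \<union> B \<subseteq> X)"
      using prod_of_bool[of "T \<union> B" "\<lambda>u. u \<in> X"] finT finB by auto
    ultimately show "(\<Prod>u\<in>B. - ?f u) * (\<Prod>u\<in>U - T - B. 1) * (\<Prod>u\<in>T. ?f u)
        = (-1) ^ card B * of_bool (T \<union> B \<subseteq> X)" by (simp add: mult.assoc)
  qed
  finally show ?thesis .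
qed

lemma rep_step:
  fixes D :: "(nat \<Rightarrow> bool) \<Rightarrow> ('k,'v) dds"
    and q :: "'m \<Rightarrow> ('k,'v) hist \<Rightarrow> 'k key option"
    and w :: "'m \<Rightarrow> ('k,'v) hist \<Rightarrow> ('k key \<times> 'v val) list"
  assumes IH: "\<And>k M. rep N d (\<lambda>x. of_bool (D x k = M))"
    and cardw: "\<And>x k. x \<in> cube N \<Longrightarrow> finite (writers S q w (D x) k) \<and> card (writers S q w (D x) k) \<le> S"
  shows "rep N (S * S * d) (\<lambda>x. of_bool (step S q w (D x) k = M))"
proof -
  define mw where "mw x m = machine_writes S (q m) (w m) (D x)" for x m
  define Z where "Z x = (\<lambda>p. (p, snd (mw x (fst p) ! snd p))) ` writers S q w (D x) k" for x
  have memZ: "((m,j),v) \<in> Z x \<longleftrightarrow> j < length (mw x m) \<and> mw x m ! j = (k,v)" for x m j v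
    unfolding Z_def writers_def mw_def by (auto simp: prod_eq_iff)
  have Zfin: "finite (Z x) \<and> card (Z x) \<le> S" if "x \<in> cube N" for x
    using cardw[OF that, of k] card_image_le[of "writers S q w (D x) k"] unfolding Z_def
    by (meson finite_imageI le_trans)
  have stepZ: "step S q w (D x) k = (\<Sum>z\<in>Z x. {#snd z#})" for x
  proof -
    have "inj_on (\<lambda>p. (p, snd (mw x (fst p) ! snd p))) (writers S q w (D x) k)"
      by (auto simp: inj_on_def)
    then show ?thesis unfolding Z_def step_def mw_def by (simp add: sum.reindex o_def)
  qed
  have rep_mem: "rep N (S * d) (\<lambda>x. of_bool (z \<in> Z x))" for z
  proof -
    obtain m j v where z: "z = ((m,j),v)" by (metis prod.collapse)
    show ?thesis unfolding z memZ mw_def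
      by (rule rep_write[OF IH])
  qed
  have rep_sub: "rep N (S * S * d) (\<lambda>x. of_bool (T' \<subseteq> Z x))" for T'
  proof (cases "finite T' \<and> card T' \<le> S")
    case True
    have "rep N (S * S * d) (\<lambda>x. \<Prod>z\<in>T'. of_bool (z \<in> Z x))"
      by (rule rep_prod[of T' N "S * d"]) (use True rep_mem in \<open>auto simp: mult_right_mono mult.assoc\<close>)
    then show ?thesis by (rule rep_cong) (use True prod_of_bool in auto)
  next
    case False
    have "\<not> T' \<subseteq> Z x" if "x \<in> cube N" for x
      using Zfin[OF that] False card_mono[of "Z x" T'] finite_subset[of T' "Z x"] by auto
    then show ?thesis using rep_const[of N "S * S * d" 0] by (rule_tac rep_cong) auto
  qed
  have rep_eq: "rep N (S * S * d) (\<lambda>x. of_bool (Z x = T))" for T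
  proof -
    define U where "U = \<Union> (Z ` cube N)"
    have finU: "finite U" unfolding U_def using finite_cube Zfin by auto
    have ZU: "Z x \<subseteq> U" if "x \<in> cube N" for x unfolding U_def using that by auto
    show ?thesis
    proof (cases "T \<subseteq> U")
      case True
      have "rep N (S * S * d) (\<lambda>x. \<Sum>B\<in>Pow (U - T). (-1) ^ card B * of_bool (T \<union> B \<subseteq> Z x))"
        using finU by (intro rep_sum rep_scale rep_sub) auto
      then show ?thesis by (rule rep_cong) (use incl_excl[OF finU ZU True] in auto)
    next
      case False
      then have "Z x \<noteq> T" if "x \<in> cube N" for x using ZU[OF that] by auto
      then show ?thesis using rep_const[of N "S * S * d" 0] by (rule_tac rep_cong) auto
    qed
  qed
  have "rep N (S * S * d) (\<lambda>x. of_bool ((\<lambda>T. (\<Sum>z\<in>T. {#snd z#}) = M) (Z x)))"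
    by (rule rep_push[of _ N _ Z]) (rule rep_eq)
  then show ?thesis by (rule rep_cong) (simp add: stepZ)
qed



lemma rep_init: "rep N 1 (\<lambda>x. of_bool (init_dds N x k = M))"
proof (cases "\<exists>i. k = Inp i \<and> 1 \<le> i \<and> i \<le> N")
  case True
  then obtain i where i: "k = Inp i" "1 \<le> i" "i \<le> N" by blast
  have "rep N 1 (\<lambda>x. of_bool ((\<lambda>b. {#Bit b#} = M) (x i)))"
  proof (rule rep_push[of _ N 1 "\<lambda>x. x i"])
    fix b :: bool
    show "rep N 1 (\<lambda>x. of_bool (x i = b))"
    proof (cases b)
      case True then show ?thesis using rep_var[OF i(2,3), of 1] by simp
    next
      case False
      have "rep N 1 (\<lambda>x. 1 - of_bool (x i))" using rep_diff[OF rep_const rep_var[OF i(2,3)]] by simp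
      then show ?thesis by (rule rep_cong) (use False in auto)
    qed
  qed
  then show ?thesis by (rule rep_cong) (use i in \<open>simp add: init_dds_def\<close>)
next
  case False
  then have "init_dds N x k = {#}" for x by (cases k) (auto simp: init_dds_def)
  note e = this
  show ?thesis by (rule rep_cong[OF rep_const[of N 1 "of_bool ({#} = M)"]]) (simp add: e)
qed

lemma main:
  assumes "ampc_computes N S R q w \<Delta> g"
  shows "r \<le> R \<Longrightarrow> rep N (S ^ (2 * r)) (\<lambda>x. of_bool (dds_round N S q w x r k = M))"
proof (induction r arbitrary: k M)
  case 0 then show ?case using rep_init by simp
next
  case (Suc r)
  have cw: "\<And>x k. x \<in> cube N \<Longrightarrow> finite (writers S (q (Suc r)) (w (Suc r)) (dds_round N S q w x r) k) \<and>
      card (writers S (q (Suc r)) (w (Suc r)) (dds_round N S q w x r) k) \<le> S"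
    using assms Suc.prems unfolding ampc_computes_def by (metis atLeastAtMost_iff diff_Suc_1 le_add1 plus_1_eq_Suc)
  have "rep N (S * S * S ^ (2 * r)) (\<lambda>x. of_bool (step S (q (Suc r)) (w (Suc r)) (dds_round N S q w x r) k = M))"
    by (rule rep_step[of N _ "\<lambda>x. dds_round N S q w x r"]) (use Suc cw in auto)
  moreover have "S * S * S ^ (2 * r) = S ^ (2 * Suc r)" by (simp add: power_add mult_2 power2_eq_square[symmetric] power_mult[symmetric] algebra_simps)
  ultimately show ?case by simp
qed



lemma ml_from_poly:
  assumes "poly_deg_le N d p"
  shows "\<exists>c. (\<forall>x\<in>cube N. p (\<lambda>i. of_bool (x i)) = ml_eval N c x) \<and>
             (\<forall>T. T \<subseteq> {1..N} \<and> c T \<noteq> 0 \<longrightarrow> card T \<le> d)"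
proof -
  obtain A c0 where A: "finite A" "\<forall>\<alpha>\<in>A. (\<Sum>i=1..N. \<alpha> i) \<le> d"
     "\<forall>y. p y = (\<Sum>\<alpha>\<in>A. c0 \<alpha> * mon N \<alpha> y)" using poly_deg_le_E[OF assms] by blast
  define sp where "sp \<alpha> = {i\<in>{1..N}. \<alpha> i \<noteq> 0}" for \<alpha> :: "nat \<Rightarrow> nat"
  define c where "c T = (\<Sum>\<alpha>\<in>{\<alpha>\<in>A. sp \<alpha> = T}. c0 \<alpha>)" for T
  define mo where "mo T x = (\<Prod>i\<in>T. (of_bool (x i) :: real))" for T :: "nat set" and x :: "nat \<Rightarrow> bool"
  have monsp: "mon N \<alpha> (\<lambda>i. of_bool (x i)) = mo (sp \<alpha>) x" for \<alpha> x
  proof -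
    have "mon N \<alpha> (\<lambda>i. of_bool (x i)) = (\<Prod>i=1..N. if \<alpha> i = 0 then 1 else (of_bool (x i)::real))"
      unfolding mon_def by (intro prod.cong) auto
    also have "\<dots> = mo (sp \<alpha>) x" unfolding mo_def sp_def
      by (subst prod.inter_filter) (simp, rule prod.cong, simp_all)
    finally show ?thesis .
  qed
  have "p (\<lambda>i. of_bool (x i)) = ml_eval N c x" if "x \<in> cube N" for x
  proof -
    have "p (\<lambda>i. of_bool (x i)) = (\<Sum>\<alpha>\<in>A. c0 \<alpha> * mo (sp \<alpha>) x)" using A(3) monsp by simp
    also have "\<dots> = (\<Sum>T\<in>sp ` A. \<Sum>\<alpha>\<in>{\<alpha>\<in>A. sp \<alpha> = T}. c0 \<alpha> * mo (sp \<alpha>) x)"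
      by (rule sum.image_gen[OF A(1)])
    also have "\<dots> = (\<Sum>T\<in>sp ` A. c T * mo T x)"
      unfolding c_def sum_distrib_right by (intro sum.cong) auto
    also have "\<dots> = (\<Sum>T\<in>Pow {1..N}. c T * mo T x)"
    proof (rule sum.mono_neutral_left)
      show "sp ` A \<subseteq> Pow {1..N}" unfolding sp_def by auto
      show "\<forall>i\<in>Pow {1..N} - sp ` A. c i * mo i x = 0"
      proof
        fix i assume "i \<in> Pow {1..N} - sp ` A"
        then have "{\<alpha>\<in>A. sp \<alpha> = i} = {}" by auto
        then have "c i = 0" unfolding c_def by (metis sum.empty)
        then show "c i * mo i x = 0" by simp
      qed
    qed auto
    finally show ?thesis unfolding ml_eval_def mo_def .
  qed
  moreover have "card T \<le> d" if "T \<subseteq> {1..N}" "c T \<noteq> 0" for T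
  proof -
    obtain \<alpha> where \<alpha>: "\<alpha> \<in> A" "sp \<alpha> = T" using \<open>c T \<noteq> 0\<close> unfolding c_def
      by (metis (mono_tags, lifting) empty_iff mem_Collect_eq subsetI subset_antisym sum.empty)
    have "card T = (\<Sum>i\<in>sp \<alpha>. 1)" using \<alpha> by simp
    also have "\<dots> \<le> (\<Sum>i\<in>sp \<alpha>. \<alpha> i)" by (intro sum_mono) (auto simp: sp_def)
    also have "\<dots> \<le> (\<Sum>i=1..N. \<alpha> i)" by (intro sum_mono2) (auto simp: sp_def)
    also have "\<dots> \<le> d" using A(2) \<alpha> by auto
    finally show ?thesis .
  qed
  ultimately show ?thesis by blast
qed

lemma ml_unique:
  assumes "\<forall>x\<in>cube N. ml_eval N c x = 0"
  shows "T \<subseteq> {1..N} \<Longrightarrow> c T = 0"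
proof (induction "card T" arbitrary: T rule: less_induct)
  case less
  define x where "x i = (i \<in> T)" for i
  have xc: "x \<in> cube N" using less.prems unfolding cube_def x_def by auto
  have finT: "finite T" using less.prems finite_subset by blast
  have "0 = ml_eval N c x" using assms xc by simp
  also have "\<dots> = (\<Sum>T'\<in>Pow {1..N}. c T' * of_bool (T' \<subseteq> T))"
    unfolding ml_eval_def
  proof (intro sum.cong refl)
    fix T' assume "T' \<in> Pow {1..N}"
    then have "finite T'" using finite_subset by auto
    then show "c T' * (\<Prod>i\<in>T'. of_bool (x i)) = c T' * of_bool (T' \<subseteq> T)"
      using prod_of_bool[of T' "\<lambda>i. i \<in> T"] unfolding x_def by auto
  qed
  also have "\<dots> = (\<Sum>T'\<in>Pow T. c T')"
  proof -
    have "(\<Sum>T'\<in>Pow {1..N}. c T' * of_bool (T' \<subseteq> T)) = (\<Sum>T'\<in>Pow T. c T' * of_bool (T' \<subseteq> T))"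
      by (rule sum.mono_neutral_right) (use less.prems in auto)
    then show ?thesis by simp
  qed
  also have "\<dots> = c T + (\<Sum>T'\<in>Pow T - {T}. c T')"
    using finT by (simp add: sum.remove[of "Pow T" T])
  also have "(\<Sum>T'\<in>Pow T - {T}. c T') = 0"
  proof (intro sum.neutral ballI)
    fix T' assume "T' \<in> Pow T - {T}"
    then have "T' \<subset> T" by auto
    then have "card T' < card T" using finT psubset_card_mono by blast
    then show "c T' = 0" using less.hyps \<open>T' \<subset> T\<close> less.prems by blast
  qed
  finally show ?case by simp
qed

lemma ml_eval_diff: "ml_eval N (\<lambda>T. c T - c' T) x = ml_eval N c x - ml_eval N c' x"
  unfolding ml_eval_def by (simp add: left_diff_distrib sum_subtractf)

lemma deg_bool_le:
  assumes "poly_deg_le N d p" "\<forall>x\<in>cube N. of_bool (g x) = p (\<lambda>i. of_bool (x i))"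
  shows "deg_bool N g \<le> d"
proof -
  obtain c where c: "\<forall>x\<in>cube N. p (\<lambda>i. of_bool (x i)) = ml_eval N c x"
      "\<forall>T. T \<subseteq> {1..N} \<and> c T \<noteq> 0 \<longrightarrow> card T \<le> d" using ml_from_poly[OF assms(1)] by blast
  define ds where "ds c = Max (insert 0 {card T | T. T \<subseteq> {1..N} \<and> c T \<noteq> (0::real)})" for c
  have gc: "\<forall>x\<in>cube N. of_bool (g x) = ml_eval N c x" using c assms(2) by simp
  have "deg_bool N g = ds c"
    unfolding deg_bool_def ds_def[symmetric]
  proof (rule the_equality)
    show "\<exists>c'. (\<forall>x\<in>cube N. of_bool (g x) = ml_eval N c' x) \<and> ds c = ds c'" using gc by blast
  next
    fix d0 assume "\<exists>c'. (\<forall>x\<in>cube N. of_bool (g x) = ml_eval N c' x) \<and> d0 = ds c'"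
    then obtain c' where c': "\<forall>x\<in>cube N. of_bool (g x) = ml_eval N c' x" "d0 = ds c'" by blast
    have "\<forall>x\<in>cube N. ml_eval N (\<lambda>T. c' T - c T) x = 0" using c' gc ml_eval_diff by simp
    then have "c' T = c T" if "T \<subseteq> {1..N}" for T using ml_unique[of N "\<lambda>T. c' T - c T" T] that by simp
    then have "{card T | T. T \<subseteq> {1..N} \<and> c' T \<noteq> 0} = {card T | T. T \<subseteq> {1..N} \<and> c T \<noteq> 0}"
      by metis
    then show "d0 = ds c" using c'(2) unfolding ds_def by simp
  qed
  also have "ds c \<le> d" unfolding ds_def
  proof (rule Max.boundedI)
    have "{card T | T. T \<subseteq> {1..N} \<and> c T \<noteq> 0} \<subseteq> card ` Pow {1..N}" by auto
    then show "finite (insert 0 {card T | T. T \<subseteq> {1..N} \<and> c T \<noteq> 0})"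
      by (meson finite_Pow_iff finite_atLeastAtMost finite_imageI finite_insert finite_subset)
  qed (use c(2) in auto)
  finally show ?thesis .
qed

theorem theorem3p2:
  fixes q :: "nat \<Rightarrow> 'm \<Rightarrow> ('k,'v) hist \<Rightarrow> 'k key option"
    and w :: "nat \<Rightarrow> 'm \<Rightarrow> ('k,'v) hist \<Rightarrow> ('k key \<times> 'v val) list"
    and g :: "(nat \<Rightarrow> bool) \<Rightarrow> bool"
    and N S R :: nat and \<Delta> :: "(nat \<Rightarrow> bool) set"
  assumes "N \<ge> 1" and "S \<ge> 1" and "\<Delta> \<subseteq> cube N"
    and "ampc_computes N S R q w \<Delta> g"
  shows "(\<exists>p. poly_deg_le N (S ^ (2 * R)) p \<and>
             (\<forall>x\<in>\<Delta>. p (\<lambda>i. of_bool (x i)) = of_bool (g x)) \<and>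
             (\<forall>x\<in>cube N - \<Delta>. p (\<lambda>i. of_bool (x i)) \<in> {0, 1})) \<and>
         (\<Delta> = cube N \<longrightarrow> deg_bool N g \<le> S ^ (2 * R))"
proof -
  have "rep N (S ^ (2 * R)) (\<lambda>x. of_bool (dds_round N S q w x R Answer = {#Bit True#}))"
    using main[OF assms(4)] by simp
  then obtain p where p: "poly_deg_le N (S ^ (2 * R)) p"
    "\<forall>x\<in>cube N. of_bool (dds_round N S q w x R Answer = {#Bit True#}) = p (\<lambda>i. of_bool (x i))"
    unfolding rep_def by blast
  have fin: "\<forall>x\<in>\<Delta>. dds_round N S q w x R = (\<lambda>k. if k = Answer then {#Bit (g x)#} else {#})"
    using assms(4) unfolding ampc_computes_def by blast
  have D: "\<forall>x\<in>\<Delta>. p (\<lambda>i. of_bool (x i)) = of_bool (g x)"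
  proof
    fix x assume x: "x \<in> \<Delta>"
    have "of_bool (dds_round N S q w x R Answer = {#Bit True#}) = p (\<lambda>i. of_bool (x i))"
      using bspec[OF p(2), of x] x assms(3) by blast
    moreover have "dds_round N S q w x R Answer = {#Bit (g x)#}" using fin x by simp
    ultimately have "p (\<lambda>i. of_bool (x i)) = of_bool ({#Bit (g x)#} = {#Bit True#})" by simp
    then show "p (\<lambda>i. of_bool (x i)) = of_bool (g x)" by simp
  qed
  have O: "\<forall>x\<in>cube N - \<Delta>. p (\<lambda>i. of_bool (x i)) \<in> {0, 1}"
  proof
    fix x assume "x \<in> cube N - \<Delta>"
    then have "p (\<lambda>i. of_bool (x i)) = of_bool (dds_round N S q w x R Answer = {#Bit True#})"
      using p(2) by auto
    then show "p (\<lambda>i. of_bool (x i)) \<in> {0, 1}" by (cases "dds_round N S q w x R Answer = {#Bit True#}") auto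
  qed
  have "\<Delta> = cube N \<longrightarrow> deg_bool N g \<le> S ^ (2 * R)"
  proof
    assume "\<Delta> = cube N"
    then show "deg_bool N g \<le> S ^ (2 * R)" using deg_bool_le[OF p(1)] D by simp
  qed
  then show ?thesis using p(1) D O by blast
qed

end
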